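(* Let $d\geq 2$ and let $\epsilon$ be a real number with $\frac{1}{d}-1<\epsilon<0$. Let $\mathcal{H}_1,\mathcal{H}_2,\mathcal{H}_3,\mathcal{H}_4$ each be $\mathbb{C}^d$, with Alice holding $\mathcal{H}_A=\mathcal{H}_1\otimes\mathcal{H}_3$ and Bob holding $\mathcal{H}_B=\mathcal{H}_2\otimes\mathcal{H}_4$. Consider the (Watrous) operator $$\rho_\epsilon=\mathbb{1}_{12}\otimes\mathbb{1}_{34}+\frac{\epsilon d-1}{d}\left(\mathbb{1}_{12}\otimes F_{34}+F_{12}\otimes\mathbb{1}_{34}\right)+F_{12}\otimes F_{34}.$$ Then the state $\rho_\epsilon/\mathrm{Tr}\,\rho_\epsilon$ is distillable.
   Context: $F_{ij}$ denotes the swap (flip) operator $\sum_{k,l}|kl\rangle\langle lk|$ exchanging the factors $\mathcal{H}_i$ and $\mathcal{H}_j$, and $\mathbb{1}_{ij}$ the identity on $\mathcal{H}_i\otimes\mathcal{H}_j$. For $\rho$ a state on $\mathcal{H}_A\otimes\mathcal{H}_B$, $\rho^{T_B}$ denotes the partial transpose with respect to Bob's system (in the computational basis). A state $\rho$ on $\mathcal{H}_A\otimes\mathcal{H}_B$ is called distillable if there exist an integer $n\geq 1$ and a vector $|\psi\rangle\in\mathcal{H}_A^{\otimes n}\otimes\mathcal{H}_B^{\otimes n}$ of Schmidt rank at most $2$ with respect to the split $\mathcal{H}_A^{\otimes n}\,|\,\mathcal{H}_B^{\otimes n}$ such that $\langle\psi|(\rho^{\otimes n})^{T_B}|\psi\rangle<0$,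 where the partial transpose is taken over all of Bob's factors. *)

theory Defs
  imports Complex_Main
begin

text \<open>Operators on a bipartite space H_A (x) H_B are represented by their matrices in the
computational basis: functions from pairs of basis labels to complex numbers.\<close>

type_synonym ('a, 'b) bop = "('a \<times> 'b) \<Rightarrow> ('a \<times> 'b) \<Rightarrow> complex"

definition op_trace :: "'a set \<Rightarrow> 'b set \<Rightarrow> ('a, 'b) bop \<Rightarrow> complex" where
  "op_trace SA SB \<rho> = (\<Sum>u\<in>SA \<times> SB. \<rho> u u)"

text \<open>Basis labels of the n-fold tensor power of a space with basis labels S.\<close>
definition tlabels :: "'a set \<Rightarrow> nat \<Rightarrow> 'a list set" where
  "tlabels S n = {xs. length xs = n \<and> set xs \<subseteq> S}"

text \<open>rho^{(x)n}, viewed as an operator on H_A^{(x)n} (x) H_B^{(x)n}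
(factors reordered so that all of Alice's factors come first).\<close>
definition tpow :: "nat \<Rightarrow> ('a, 'b) bop \<Rightarrow> ('a list, 'b list) bop" where
  "tpow n \<rho> = (\<lambda>(xs, ys) (xs', ys'). \<Prod>k<n. \<rho> (xs ! k, ys ! k) (xs' ! k, ys' ! k))"

definition ptrans_B :: "('a, 'b) bop \<Rightarrow> ('a, 'b) bop" where
  "ptrans_B M = (\<lambda>(x, y) (x', y'). M (x, y') (x', y))"

definition schmidt_rank_le :: "nat \<Rightarrow> 'a set \<Rightarrow> 'b set \<Rightarrow> ('a \<times> 'b \<Rightarrow> complex) \<Rightarrow> bool" where
  "schmidt_rank_le k XA XB \<psi> \<longleftrightarrow>
     (\<exists>(a :: nat \<Rightarrow> 'a \<Rightarrow> complex) (b :: nat \<Rightarrow> 'b \<Rightarrow> complex).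
        \<forall>x\<in>XA. \<forall>y\<in>XB. \<psi> (x, y) = (\<Sum>i<k. a i x * b i y))"

definition qform :: "'a set \<Rightarrow> 'b set \<Rightarrow> ('a, 'b) bop \<Rightarrow> ('a \<times> 'b \<Rightarrow> complex) \<Rightarrow> complex" where
  "qform XA XB M \<psi> = (\<Sum>u\<in>XA \<times> XB. \<Sum>v\<in>XA \<times> XB. cnj (\<psi> u) * M u v * \<psi> v)"

definition distillable :: "'a set \<Rightarrow> 'b set \<Rightarrow> ('a, 'b) bop \<Rightarrow> bool" where
  "distillable SA SB \<rho> \<longleftrightarrow>
     (\<exists>n\<ge>1. \<exists>\<psi>. schmidt_rank_le 2 (tlabels SA n) (tlabels SB n) \<psi> \<and>
        (let q = qform (tlabels SA n) (tlabels SB n) (ptrans_B (tpow n \<rho>)) \<psi>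
         in Im q = 0 \<and> Re q < 0))"

definition kd :: "nat \<Rightarrow> nat \<Rightarrow> complex" where
  "kd i j = (if i = j then 1 else 0)"

text \<open>Watrous operator on H1 (x) H2 (x) H3 (x) H4, each C^d; Alice holds H1 (x) H3
with labels (i1,i3), Bob holds H2 (x) H4 with labels (i2,i4).
Matrix entries: 1_12 = kd i1 j1 * kd i2 j2, F_12 = kd i1 j2 * kd i2 j1, similarly for 34.\<close>
definition watrous :: "nat \<Rightarrow> real \<Rightarrow> (nat \<times> nat, nat \<times> nat) bop" where
  "watrous d \<epsilon> = (\<lambda>((i1, i3), (i2, i4)) ((j1, j3), (j2, j4)).
     let I12 = kd i1 j1 * kd i2 j2; F12 = kd i1 j2 * kd i2 j1;
         I34 = kd i3 j3 * kd i4 j4; F34 = kd i3 j4 * kd i4 j3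
     in I12 * I34 + complex_of_real ((\<epsilon> * d - 1) / d) * (I12 * F34 + F12 * I34) + F12 * F34)"

end

theory Submission
  imports Defs
begin

lemma tlabels_Suc: "tlabels S (Suc n) = (\<lambda>(x,xs). x#xs) ` (S \<times> tlabels S n)"
  unfolding tlabels_def
  by (auto simp: image_iff length_Suc_conv)

lemma finite_tlabels: "finite S \<Longrightarrow> finite (tlabels S n)"
  proof -
  assume "finite S"
  from finite_lists_length_eq[OF this, of n] show ?thesis unfolding tlabels_def by (simp add: conj_commute)
qed

lemma sum_tlabels_Suc:
  assumes "finite S"
  shows "(\<Sum>xs\<in>tlabels S (Suc n). f xs) = (\<Sum>x\<in>S. \<Sum>xs\<in>tlabels S n. f (x#xs))"
proof -
  have inj: "inj_on (\<lambda>(x,xs). x#xs) (S \<times> tlabels S n)" by (auto simp: inj_on_def)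
  have "(\<Sum>xs\<in>tlabels S (Suc n). f xs) = (\<Sum>z\<in>S \<times> tlabels S n. f ((\<lambda>(x,xs). x#xs) z))"
    unfolding tlabels_Suc using sum.reindex[OF inj, of f] by (simp add: comp_def)
  also have "\<dots> = (\<Sum>x\<in>S. \<Sum>xs\<in>tlabels S n. f (x#xs))"
    by (simp add: sum.cartesian_product split_def)
  finally show ?thesis .
qed

lemma sum8:
  fixes f :: "_ \<Rightarrow> _ \<Rightarrow> _ \<Rightarrow> _ \<Rightarrow> 'z::comm_semiring_1"
  shows "(\<Sum>x\<in>A. \<Sum>xs\<in>A'. \<Sum>y\<in>B. \<Sum>ys\<in>B'. \<Sum>x'\<in>C. \<Sum>xs'\<in>C'. \<Sum>y'\<in>D. \<Sum>ys'\<in>D'. f x y x' y' * g x y x' y' xs ys xs' ys')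
   = (\<Sum>x\<in>A. \<Sum>y\<in>B. \<Sum>x'\<in>C. \<Sum>y'\<in>D. f x y x' y' * (\<Sum>xs\<in>A'. \<Sum>ys\<in>B'. \<Sum>xs'\<in>C'. \<Sum>ys'\<in>D'. g x y x' y' xs ys xs' ys'))"
proof -
  have "(\<Sum>x\<in>A. \<Sum>xs\<in>A'. \<Sum>y\<in>B. \<Sum>ys\<in>B'. \<Sum>x'\<in>C. \<Sum>xs'\<in>C'. \<Sum>y'\<in>D. \<Sum>ys'\<in>D'. f x y x' y' * g x y x' y' xs ys xs' ys')
     = (\<Sum>x\<in>A. \<Sum>xs\<in>A'. \<Sum>y\<in>B. \<Sum>ys\<in>B'. \<Sum>x'\<in>C. \<Sum>y'\<in>D. \<Sum>xs'\<in>C'. \<Sum>ys'\<in>D'. f x y x' y' * g x y x' y' xs ys xs' ys')"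
    by (simp add: sum.swap[of _ C'])
  also have "\<dots> = (\<Sum>x\<in>A. \<Sum>xs\<in>A'. \<Sum>y\<in>B. \<Sum>x'\<in>C. \<Sum>y'\<in>D. \<Sum>ys\<in>B'. \<Sum>xs'\<in>C'. \<Sum>ys'\<in>D'. f x y x' y' * g x y x' y' xs ys xs' ys')"
    by (simp add: sum.swap[of _ B'])
  also have "\<dots> = (\<Sum>x\<in>A. \<Sum>y\<in>B. \<Sum>x'\<in>C. \<Sum>y'\<in>D. \<Sum>xs\<in>A'. \<Sum>ys\<in>B'. \<Sum>xs'\<in>C'. \<Sum>ys'\<in>D'. f x y x' y' * g x y x' y' xs ys xs' ys')"
    by (simp add: sum.swap[of _ A'])
  also have "\<dots> = (\<Sum>x\<in>A. \<Sum>y\<in>B. \<Sum>x'\<in>C. \<Sum>y'\<in>D. f x y x' y' * (\<Sum>xs\<in>A'. \<Sum>ys\<in>B'. \<Sum>xs'\<in>C'. \<Sum>ys'\<in>D'. g x y x' y' xs ys xs' ys'))"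
    by (simp only: sum_distrib_left)
  finally show ?thesis .
qed

fun ch :: "nat \<Rightarrow> nat \<Rightarrow> (nat \<times> nat) list \<Rightarrow> complex" where
  "ch j m [] = kd m j"
| "ch j m (x#xs) = kd (snd x) m * ch j (fst x) xs"

definition Psi :: "nat \<Rightarrow> nat \<Rightarrow> (nat\<times>nat) list \<Rightarrow> (nat\<times>nat) list \<Rightarrow> complex" where
  "Psi m \<mu> xs ys = (\<Sum>j<2. ch j m xs * ch j \<mu> ys)"

definition HH :: "(nat\<times>nat) set \<Rightarrow> (nat\<times>nat, nat\<times>nat) bop \<Rightarrow> nat \<Rightarrow> nat \<Rightarrow> nat \<Rightarrow> nat \<Rightarrow> nat \<Rightarrow> complex" where
  "HH S \<rho> n m m' \<mu> \<mu>' = (\<Sum>xs\<in>tlabels S n. \<Sum>ys\<in>tlabels S n. \<Sum>xs'\<in>tlabels S n. \<Sum>ys'\<in>tlabels S n.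
      (Psi m \<mu> xs ys * Psi m' \<mu>' xs' ys') * (\<Prod>k<n. \<rho> (xs!k, ys'!k) (xs'!k, ys!k)))"

lemma Psi_Cons: "Psi m \<mu> (x#xs) (y#ys) = kd (snd x) m * kd (snd y) \<mu> * Psi (fst x) (fst y) xs ys"
  unfolding Psi_def by (simp add: sum_distrib_left mult_ac)

lemma HH_Suc:
  assumes "finite S"
  shows "HH S \<rho> (Suc n) m m' \<mu> \<mu>' = (\<Sum>x\<in>S. \<Sum>y\<in>S. \<Sum>x'\<in>S. \<Sum>y'\<in>S.
     (kd (snd x) m * kd (snd y) \<mu> * kd (snd x') m' * kd (snd y') \<mu>' * \<rho> (x,y') (x',y))
       * HH S \<rho> n (fst x) (fst x') (fst y) (fst y'))"
proof -
  have e: "(Psi m \<mu> (x#xs) (y#ys) * Psi m' \<mu>' (x'#xs') (y'#ys')) * (\<Prod>k<Suc n. \<rho> ((x#xs)!k, (y'#ys')!k) ((x'#xs')!k, (y#ys)!k))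
     = (kd (snd x) m * kd (snd y) \<mu> * kd (snd x') m' * kd (snd y') \<mu>' * \<rho> (x,y') (x',y))
       * ((Psi (fst x) (fst y) xs ys * Psi (fst x') (fst y') xs' ys') * (\<Prod>k<n. \<rho> (xs!k, ys'!k) (xs'!k, ys!k)))"
    for x y x' y' xs ys xs' ys'
    unfolding prod.lessThan_Suc_shift by (simp add: Psi_Cons mult_ac del: prod.lessThan_Suc)
  show ?thesis
    unfolding HH_def
    by (simp only: sum_tlabels_Suc[OF assms] e sum8)
qed

lemma ifz_mult: "(if P then x else 0) * (y::complex) = (if P then x * y else 0)" "y * (if P then x else 0) = (if P then y * x else 0)"
  by simp_all
lemma if_if_z: "(if P then (if Q then x else 0) else (0::complex)) = (if P \<and> Q then x else 0)" by simp

lemma sum_if_z: "finite A \<Longrightarrow> (\<Sum>k\<in>A. if P k then F k else (0::complex)) = (\<Sum>k\<in>A \<inter> {k. P k}. F k)"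
  by (simp add: sum.inter_restrict)

lemma sdm: "finite A \<Longrightarrow> (\<And>k. C k \<Longrightarrow> k = a) \<Longrightarrow> (\<Sum>k\<in>A. if C k then F k else (0::complex)) = (if a \<in> A \<and> C a then F a else 0)"
proof -
  assume f: "finite A" and u: "\<And>k. C k \<Longrightarrow> k = a"
  have "(\<Sum>k\<in>A. if C k then F k else (0::complex)) = (\<Sum>k\<in>A. if k = a then (if C a then F a else 0) else 0)"
    by (rule sum.cong) (auto dest: u)
  also have "\<dots> = (if a \<in> A \<and> C a then F a else 0)" using f by simp
  finally show ?thesis .
qed

lemma sd0[simp]: "finite A \<Longrightarrow> (\<Sum>k\<in>A. if k = a \<and> R k then F k else (0::complex)) = (if a \<in> A \<and> a = a \<and> R a then F a else 0)"
  by (rule trans[OF sdm]) auto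
lemma sd1[simp]: "finite A \<Longrightarrow> (\<Sum>k\<in>A. if a = k \<and> R k then F k else (0::complex)) = (if a \<in> A \<and> a = a \<and> R a then F a else 0)"
  by (rule trans[OF sdm]) auto
lemma sd2[simp]: "finite A \<Longrightarrow> (\<Sum>k\<in>A. if Q k \<and> k = a then F k else (0::complex)) = (if a \<in> A \<and> Q a \<and> a = a then F a else 0)"
  by (rule trans[OF sdm]) auto
lemma sd3[simp]: "finite A \<Longrightarrow> (\<Sum>k\<in>A. if Q k \<and> a = k then F k else (0::complex)) = (if a \<in> A \<and> Q a \<and> a = a then F a else 0)"
  by (rule trans[OF sdm]) auto
lemma sd4[simp]: "finite A \<Longrightarrow> (\<Sum>k\<in>A. if Q k \<and> k = a \<and> R k then F k else (0::complex)) = (if a \<in> A \<and> Q a \<and> a = a \<and> R a then F a else 0)"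
  by (rule trans[OF sdm]) auto
lemma sd5[simp]: "finite A \<Longrightarrow> (\<Sum>k\<in>A. if Q k \<and> a = k \<and> R k then F k else (0::complex)) = (if a \<in> A \<and> Q a \<and> a = a \<and> R a then F a else 0)"
  by (rule trans[OF sdm]) auto
lemma sd6[simp]: "finite A \<Longrightarrow> (\<Sum>k\<in>A. if Q k \<and> Q2 k \<and> k = a then F k else (0::complex)) = (if a \<in> A \<and> Q a \<and> Q2 a \<and> a = a then F a else 0)"
  by (rule trans[OF sdm]) auto
lemma sd7[simp]: "finite A \<Longrightarrow> (\<Sum>k\<in>A. if Q k \<and> Q2 k \<and> a = k then F k else (0::complex)) = (if a \<in> A \<and> Q a \<and> Q2 a \<and> a = a then F a else 0)"
  by (rule trans[OF sdm]) auto
lemma sd8[simp]: "finite A \<Longrightarrow> (\<Sum>k\<in>A. if Q k \<and> Q2 k \<and> k = a \<and> R k then F k else (0::complex)) = (if a \<in> A \<and> Q a \<and> Q2 a \<and> a = a \<and> R a then F a else 0)"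
  by (rule trans[OF sdm]) auto
lemma sd9[simp]: "finite A \<Longrightarrow> (\<Sum>k\<in>A. if Q k \<and> Q2 k \<and> a = k \<and> R k then F k else (0::complex)) = (if a \<in> A \<and> Q a \<and> Q2 a \<and> a = a \<and> R a then F a else 0)"
  by (rule trans[OF sdm]) auto
lemma sd10[simp]: "finite A \<Longrightarrow> (\<Sum>k\<in>A. if Q k \<and> Q2 k \<and> Q3 k \<and> k = a then F k else (0::complex)) = (if a \<in> A \<and> Q a \<and> Q2 a \<and> Q3 a \<and> a = a then F a else 0)"
  by (rule trans[OF sdm]) auto
lemma sd11[simp]: "finite A \<Longrightarrow> (\<Sum>k\<in>A. if Q k \<and> Q2 k \<and> Q3 k \<and> a = k then F k else (0::complex)) = (if a \<in> A \<and> Q a \<and> Q2 a \<and> Q3 a \<and> a = a then F a else 0)"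
  by (rule trans[OF sdm]) auto
lemmas kdsimps = kd_def ifz_mult if_if_z sum.delta sum.delta' power2_eq_square

lemma s1: "(\<Sum>p<d. \<Sum>r<d. \<Sum>p'<d. \<Sum>r'<d. kd p p' * kd r' r * (kd p p' * kd r r')) = (of_nat d)^2"
  by (simp add: kdsimps cong: conj_cong if_cong)
lemma s2: "(\<Sum>p<d. \<Sum>r<d. \<Sum>p'<d. \<Sum>r'<d. kd p p' * kd r' r * (kd p r * kd p' r')) = of_nat d"
  by (simp add: kdsimps cong: conj_cong if_cong)
lemma s3: "(\<Sum>p<d. \<Sum>r<d. \<Sum>p'<d. \<Sum>r'<d. kd p r * kd r' p' * (kd p p' * kd r r')) = of_nat d"
  by (simp add: kdsimps cong: conj_cong if_cong)
lemma s4: "(\<Sum>p<d. \<Sum>r<d. \<Sum>p'<d. \<Sum>r'<d. kd p r * kd r' p' * (kd p r * kd p' r')) = (of_nat d)^2"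
  by (simp add: kdsimps cong: conj_cong if_cong)
lemma kd_sym: "kd a b = kd b a" by (simp add: kd_def)

lemma sum4_lin:
  fixes A B C D :: complex
  shows "(\<Sum>p<d. \<Sum>r<d. \<Sum>p'<d. \<Sum>r'<d. A * f p r p' r' + B * g p r p' r' + C * h p r p' r' + D * k p r p' r')
   = A * (\<Sum>p<d. \<Sum>r<d. \<Sum>p'<d. \<Sum>r'<d. f p r p' r') + B * (\<Sum>p<d. \<Sum>r<d. \<Sum>p'<d. \<Sum>r'<d. g p r p' r')
     + C * (\<Sum>p<d. \<Sum>r<d. \<Sum>p'<d. \<Sum>r'<d. h p r p' r') + D * (\<Sum>p<d. \<Sum>r<d. \<Sum>p'<d. \<Sum>r'<d. k p r p' r')"
  by (simp add: sum.distrib sum_distrib_left)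

lemma transfer:
  fixes a b cc :: complex and d :: nat and \<epsilon> :: real
  assumes cc: "complex_of_real ((\<epsilon> * d - 1) / d) = cc"
  shows "(\<Sum>p<d. \<Sum>r<d. \<Sum>p'<d. \<Sum>r'<d. watrous d \<epsilon> ((p,m),(r',\<mu>')) ((p',m'),(r,\<mu>)) * (a * (kd p p' * kd r r') + b * (kd p r * kd p' r')))
    = (a * (of_nat d^2 + cc * of_nat d) + b * (of_nat d + cc * of_nat d^2)) * (kd m m' * kd \<mu> \<mu>')
      + (a * (cc * of_nat d^2 + of_nat d) + b * (cc * of_nat d + of_nat d^2)) * (kd m \<mu> * kd m' \<mu>')"
proof -
  define I34 where "I34 = kd m m' * kd \<mu>' \<mu>"
  define F34 where "F34 = kd m \<mu> * kd \<mu>' m'"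
  have e: "watrous d \<epsilon> ((p,m),(r',\<mu>')) ((p',m'),(r,\<mu>)) * (a * (kd p p' * kd r r') + b * (kd p r * kd p' r'))
     = (I34 + cc * F34) * a * (kd p p' * kd r' r * (kd p p' * kd r r'))
       + (I34 + cc * F34) * b * (kd p p' * kd r' r * (kd p r * kd p' r'))
       + (cc * I34 + F34) * a * (kd p r * kd r' p' * (kd p p' * kd r r'))
       + (cc * I34 + F34) * b * (kd p r * kd r' p' * (kd p r * kd p' r'))" for p r p' r'
    unfolding watrous_def Let_def I34_def F34_def cc prod.case by (simp add: algebra_simps)
  have "(\<Sum>p<d. \<Sum>r<d. \<Sum>p'<d. \<Sum>r'<d. watrous d \<epsilon> ((p,m),(r',\<mu>')) ((p',m'),(r,\<mu>)) * (a * (kd p p' * kd r r') + b * (kd p r * kd p' r')))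
    = (I34 + cc * F34) * a * of_nat d^2 + (I34 + cc * F34) * b * of_nat d + (cc * I34 + F34) * a * of_nat d + (cc * I34 + F34) * b * of_nat d^2"
    unfolding e sum4_lin s1 s2 s3 s4 ..
  also have "\<dots> = (a * (of_nat d^2 + cc * of_nat d) + b * (of_nat d + cc * of_nat d^2)) * (kd m m' * kd \<mu> \<mu>')
      + (a * (cc * of_nat d^2 + of_nat d) + b * (cc * of_nat d + of_nat d^2)) * (kd m \<mu> * kd m' \<mu>')"
    unfolding I34_def F34_def by (simp add: algebra_simps kd_sym[of \<mu>' \<mu>] kd_sym[of \<mu>' m'])
  finally show ?thesis .
qed
lemma pair_kd_sum:
  assumes "m < d"
  shows "(\<Sum>x\<in>{..<d}\<times>{..<d}. kd (snd x) m * F x) = (\<Sum>p<d. F (p,m))"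
proof -
  have "(\<Sum>x\<in>{..<d}\<times>{..<d}. kd (snd x) m * F x) = (\<Sum>p<d. \<Sum>q<d. kd q m * F (p,q))"
    by (subst sum.cartesian_product) (simp add: case_prod_unfold)
  also have "\<dots> = (\<Sum>p<d. F (p,m))"
    using assms by (simp add: kd_def ifz_mult sum.delta)
  finally show ?thesis .
qed

lemma HH_Suc_eval:
  assumes "m < d" "m' < d" "\<mu> < d" "\<mu>' < d"
  shows "HH ({..<d}\<times>{..<d}) \<rho> (Suc n) m m' \<mu> \<mu>' =
    (\<Sum>p<d. \<Sum>r<d. \<Sum>p'<d. \<Sum>r'<d. \<rho> ((p,m),(r',\<mu>')) ((p',m'),(r,\<mu>)) * HH ({..<d}\<times>{..<d}) \<rho> n p p' r r')"
proof -
  let ?S = "{..<d}\<times>{..<d}"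
  let ?H = "HH ?S \<rho> n"
  have "HH ?S \<rho> (Suc n) m m' \<mu> \<mu>' = (\<Sum>x\<in>?S. \<Sum>y\<in>?S. \<Sum>x'\<in>?S. \<Sum>y'\<in>?S.
     (kd (snd x) m * kd (snd y) \<mu> * kd (snd x') m' * kd (snd y') \<mu>' * \<rho> (x,y') (x',y))
       * ?H (fst x) (fst x') (fst y) (fst y'))"
    by (rule HH_Suc) simp
  also have "\<dots> = (\<Sum>x\<in>?S. kd (snd x) m * (\<Sum>y\<in>?S. kd (snd y) \<mu> * (\<Sum>x'\<in>?S. kd (snd x') m' * (\<Sum>y'\<in>?S. kd (snd y') \<mu>' *
       (\<rho> (x,y') (x',y) * ?H (fst x) (fst x') (fst y) (fst y'))))))"
    by (simp add: sum_distrib_left mult_ac)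
  also have "\<dots> = (\<Sum>p<d. \<Sum>r<d. \<Sum>p'<d. \<Sum>r'<d. \<rho> ((p,m),(r',\<mu>')) ((p',m'),(r,\<mu>)) * ?H p p' r r')"
    by (simp only: pair_kd_sum[OF assms(1)] pair_kd_sum[OF assms(2)] pair_kd_sum[OF assms(3)] pair_kd_sum[OF assms(4)] fst_conv snd_conv)
  finally show ?thesis .
qed

lemma tlabels_0: "tlabels S 0 = {[]}" by (auto simp: tlabels_def)

lemma HH_0: "HH S \<rho> 0 p p' r r' = (\<Sum>j<2. kd p j * kd r j) * (\<Sum>j<2. kd p' j * kd r' j)"
  unfolding HH_def tlabels_0 Psi_def by simp

lemma b1: "2 \<le> d \<Longrightarrow> (\<Sum>p<d. \<Sum>r<d. \<Sum>p'<d. \<Sum>r'<d. kd p p' * kd r' r * ((\<Sum>j<2. kd p j * kd r j) * (\<Sum>j<2. kd p' j * kd r' j))) = 2"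
  by (simp add: kdsimps distrib_left distrib_right sum.distrib numeral_2_eq_2 cong: conj_cong if_cong)
lemma b2: "2 \<le> d \<Longrightarrow> (\<Sum>p<d. \<Sum>r<d. \<Sum>p'<d. \<Sum>r'<d. kd p r * kd r' p' * ((\<Sum>j<2. kd p j * kd r j) * (\<Sum>j<2. kd p' j * kd r' j))) = 4"
  by (simp add: kdsimps distrib_left distrib_right sum.distrib numeral_2_eq_2 cong: conj_cong if_cong)

lemma sum4_lin2:
  fixes A B :: complex
  shows "(\<Sum>p<d. \<Sum>r<d. \<Sum>p'<d. \<Sum>r'<d. A * f p r p' r' + B * g p r p' r')
   = A * (\<Sum>p<d. \<Sum>r<d. \<Sum>p'<d. \<Sum>r'<d. f p r p' r') + B * (\<Sum>p<d. \<Sum>r<d. \<Sum>p'<d. \<Sum>r'<d. g p r p' r')"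
  by (simp add: sum.distrib sum_distrib_left)

lemma transfer0:
  fixes d :: nat and \<epsilon> :: real and cc :: complex
  assumes cc: "complex_of_real ((\<epsilon> * d - 1) / d) = cc"
  assumes d2: "2 \<le> d"
  shows "(\<Sum>p<d. \<Sum>r<d. \<Sum>p'<d. \<Sum>r'<d. watrous d \<epsilon> ((p,m),(r',\<mu>')) ((p',m'),(r,\<mu>)) * ((\<Sum>j<2. kd p j * kd r j) * (\<Sum>j<2. kd p' j * kd r' j)))
    = (2 + 4 * cc) * (kd m m' * kd \<mu> \<mu>') + (2 * cc + 4) * (kd m \<mu> * kd m' \<mu>')"
proof -
  define I34 where "I34 = kd m m' * kd \<mu>' \<mu>"
  define F34 where "F34 = kd m \<mu> * kd \<mu>' m'"
  have e: "watrous d \<epsilon> ((p,m),(r',\<mu>')) ((p',m'),(r,\<mu>)) * ((\<Sum>j<2. kd p j * kd r j) * (\<Sum>j<2. kd p' j * kd r' j))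
     = (I34 + cc * F34) * (kd p p' * kd r' r * ((\<Sum>j<2. kd p j * kd r j) * (\<Sum>j<2. kd p' j * kd r' j)))
       + (cc * I34 + F34) * (kd p r * kd r' p' * ((\<Sum>j<2. kd p j * kd r j) * (\<Sum>j<2. kd p' j * kd r' j)))" for p r p' r'
    unfolding watrous_def Let_def I34_def F34_def cc prod.case by (simp add: algebra_simps)
  have "(\<Sum>p<d. \<Sum>r<d. \<Sum>p'<d. \<Sum>r'<d. watrous d \<epsilon> ((p,m),(r',\<mu>')) ((p',m'),(r,\<mu>)) * ((\<Sum>j<2. kd p j * kd r j) * (\<Sum>j<2. kd p' j * kd r' j)))
    = (I34 + cc * F34) * 2 + (cc * I34 + F34) * 4"
    unfolding e sum4_lin2 b1[OF d2] b2[OF d2] ..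
  also have "\<dots> = (2 + 4 * cc) * (kd m m' * kd \<mu> \<mu>') + (2 * cc + 4) * (kd m \<mu> * kd m' \<mu>')"
    unfolding I34_def F34_def by (simp add: algebra_simps kd_sym[of \<mu>' \<mu>] kd_sym[of \<mu>' m'])
  finally show ?thesis .
qed

primrec AB :: "complex \<Rightarrow> complex \<Rightarrow> nat \<Rightarrow> complex \<times> complex" where
  "AB cc D 0 = (2 + 4 * cc, 2 * cc + 4)"
| "AB cc D (Suc n) = (fst (AB cc D n) * (D^2 + cc * D) + snd (AB cc D n) * (D + cc * D^2),
                      fst (AB cc D n) * (cc * D^2 + D) + snd (AB cc D n) * (cc * D + D^2))"

lemma HH_closed:
  fixes d :: nat and \<epsilon> :: real and cc :: complex
  assumes cc: "complex_of_real ((\<epsilon> * d - 1) / d) = cc"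
  assumes d2: "2 \<le> d"
  shows "m < d \<Longrightarrow> m' < d \<Longrightarrow> \<mu> < d \<Longrightarrow> \<mu>' < d \<Longrightarrow>
    HH ({..<d}\<times>{..<d}) (watrous d \<epsilon>) (Suc n) m m' \<mu> \<mu>' =
      fst (AB cc (of_nat d) n) * (kd m m' * kd \<mu> \<mu>') + snd (AB cc (of_nat d) n) * (kd m \<mu> * kd m' \<mu>')"
proof (induction n arbitrary: m m' \<mu> \<mu>')
  case 0
  then show ?case
    unfolding HH_Suc_eval[OF 0] HH_0 transfer0[OF cc d2] by simp
next
  case (Suc n)
  have "HH ({..<d}\<times>{..<d}) (watrous d \<epsilon>) (Suc (Suc n)) m m' \<mu> \<mu>' =
     (\<Sum>p<d. \<Sum>r<d. \<Sum>p'<d. \<Sum>r'<d. watrous d \<epsilon> ((p,m),(r',\<mu>')) ((p',m'),(r,\<mu>)) *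
        (fst (AB cc (of_nat d) n) * (kd p p' * kd r r') + snd (AB cc (of_nat d) n) * (kd p r * kd p' r')))"
    unfolding HH_Suc_eval[OF Suc.prems] by (intro sum.cong refl) (simp add: Suc.IH)
  also have "\<dots> = fst (AB cc (of_nat d) (Suc n)) * (kd m m' * kd \<mu> \<mu>') + snd (AB cc (of_nat d) (Suc n)) * (kd m \<mu> * kd m' \<mu>')"
    unfolding transfer[OF cc] by simp
  finally show ?case .
qed

lemma AB_closed:
  "fst (AB cc D n) = 3 * (1 + cc) * (D * (D + 1) * (1 + cc))^n - (1 - cc) * (D * (D - 1) * (1 - cc))^n"
proof -
  have "fst (AB cc D n) + snd (AB cc D n) = 6 * (1 + cc) * (D * (D + 1) * (1 + cc))^n \<and>
        fst (AB cc D n) - snd (AB cc D n) = - 2 * (1 - cc) * (D * (D - 1) * (1 - cc))^n"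
  proof (induction n)
    case 0 then show ?case by simp
  next
    case (Suc n)
    let ?a = "fst (AB cc D n)" and ?b = "snd (AB cc D n)"
    have "fst (AB cc D (Suc n)) + snd (AB cc D (Suc n)) = (?a + ?b) * (D * (D + 1) * (1 + cc))"
      by (simp add: algebra_simps power2_eq_square)
    moreover have "fst (AB cc D (Suc n)) - snd (AB cc D (Suc n)) = (?a - ?b) * (D * (D - 1) * (1 - cc))"
      by (simp add: algebra_simps power2_eq_square)
    ultimately show ?case using Suc.IH by simp
  qed
  then have h1: "fst (AB cc D n) + snd (AB cc D n) = 6 * (1 + cc) * (D * (D + 1) * (1 + cc))^n"
    and h2: "fst (AB cc D n) - snd (AB cc D n) = - 2 * (1 - cc) * (D * (D - 1) * (1 - cc))^n" by auto
  have "2 * fst (AB cc D n) = (fst (AB cc D n) + snd (AB cc D n)) + (fst (AB cc D n) - snd (AB cc D n))"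
    by simp
  also have "\<dots> = 6 * (1 + cc) * (D * (D + 1) * (1 + cc))^n + - 2 * (1 - cc) * (D * (D - 1) * (1 - cc))^n"
    by (simp only: h1 h2)
  finally have "2 * fst (AB cc D n) = 2 * (3 * (1 + cc) * (D * (D + 1) * (1 + cc))^n - (1 - cc) * (D * (D - 1) * (1 - cc))^n)"
    by (simp add: algebra_simps)
  then show ?thesis by (metis mult_cancel_left zero_neq_numeral)
qed
lemma sum_prod_split: "(\<Sum>u\<in>A\<times>B. f u) = (\<Sum>a\<in>A. \<Sum>b\<in>B. f (a,b))"
  by (subst sum.cartesian_product) (simp add: case_prod_unfold)

lemma cnj_kd: "cnj (kd a b) = kd a b" by (simp add: kd_def)

lemma cnj_ch: "cnj (ch j m xs) = ch j m xs"
  by (induction xs arbitrary: m) (simp_all add: cnj_kd)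

lemma cnj_Psi: "cnj (Psi m \<mu> xs ys) = Psi m \<mu> xs ys"
  unfolding Psi_def by (simp add: cnj_ch)

lemma qform_HH:
  "qform (tlabels S n) (tlabels S n) (ptrans_B (tpow n \<rho>)) (\<lambda>(xs,ys). Psi m \<mu> xs ys) = HH S \<rho> n m m \<mu> \<mu>"
  unfolding qform_def ptrans_B_def tpow_def HH_def
  by (simp add: sum_prod_split cnj_Psi mult_ac)

lemma HH_scale:
  "HH S (\<lambda>u v. \<rho> u v / T) n m m' \<mu> \<mu>' = HH S \<rho> n m m' \<mu> \<mu>' / T^n"
  unfolding HH_def by (simp add: prod_dividef sum_divide_distrib)

lemma trace_W:
  fixes cc :: complex
  assumes cc: "complex_of_real ((\<epsilon> * d - 1) / d) = cc"
  shows "op_trace ({..<d}\<times>{..<d}) ({..<d}\<times>{..<d}) (watrous d \<epsilon>) = of_nat d ^ 4 + 2 * cc * of_nat d ^ 3 + of_nat d ^ 2"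
proof -
  have "op_trace ({..<d}\<times>{..<d}) ({..<d}\<times>{..<d}) (watrous d \<epsilon>)
     = (\<Sum>i1<d. \<Sum>i3<d. \<Sum>i2<d. \<Sum>i4<d. 1 + cc * (kd i3 i4 * kd i4 i3 + kd i1 i2 * kd i2 i1) + kd i1 i2 * kd i2 i1 * (kd i3 i4 * kd i4 i3))"
    unfolding op_trace_def sum_prod_split watrous_def Let_def cc prod.case by (simp add: kd_def)
  also have "\<dots> = of_nat d ^ 4 + 2 * cc * of_nat d ^ 3 + of_nat d ^ 2"
    apply (simp add: kdsimps sum.distrib distrib_left sum_distrib_left[symmetric] cong: conj_cong if_cong)
    apply (simp add: eval_nat_numeral algebra_simps)
    done
  finally show ?thesis .
qed
theorem mainTheorem2:
  fixes d :: nat and \<epsilon> :: real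
  assumes "d \<ge> 2"
    and "1 / real d - 1 < \<epsilon>" and "\<epsilon> < 0"
  shows "distillable ({..<d} \<times> {..<d}) ({..<d} \<times> {..<d})
           (\<lambda>u v. watrous d \<epsilon> u v / op_trace ({..<d} \<times> {..<d}) ({..<d} \<times> {..<d}) (watrous d \<epsilon>))"
proof -
  note d2 = assms(1)
  define c where "c = (\<epsilon> * d - 1) / d"
  define cc where "cc = complex_of_real c"
  have cc: "complex_of_real ((\<epsilon> * d - 1) / d) = cc" unfolding cc_def c_def ..
  let ?S = "{..<d} \<times> {..<d}"
  let ?W = "watrous d \<epsilon>"
  let ?T = "op_trace ?S ?S ?W"
  have dpos: "real d \<ge> 2" using d2 by simp
  have c_eq: "c = \<epsilon> - 1 / d" unfolding c_def using dpos by (simp add: field_simps)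
  have c_gt: "-1 < c" using assms(2) c_eq by simp
  have c_lt: "c * d < -1"
  proof -
    have "c * d = \<epsilon> * d - 1" unfolding c_eq using dpos by (simp add: field_simps)
    moreover have "\<epsilon> * d < 0" using assms(3) dpos by (simp add: mult_neg_pos)
    ultimately show ?thesis by simp
  qed
  define t where "t = real d ^ 4 + 2 * c * real d ^ 3 + real d ^ 2"
  have T: "?T = complex_of_real t"
    unfolding trace_W[OF cc] t_def cc_def by simp
  have tpos: "t > 0"
  proof -
    have "t = real d ^ 2 * (real d ^ 2 + 2 * c * real d + 1)" unfolding t_def by (simp add: algebra_simps power2_eq_square power3_eq_cube eval_nat_numeral)
    moreover have "real d ^ 2 + 2 * c * real d + 1 > real d ^ 2 - 2 * real d + 1"
    proof -
      have cd: "(c + 1) * real d > 0" using c_gt dpos by simp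
      have "2 * c * real d > - 2 * real d" using cd by (simp add: algebra_simps)
      then show ?thesis by linarith
    qed
    moreover have "real d ^ 2 - 2 * real d + 1 \<ge> 0"
    proof -
      have "real d ^ 2 - 2 * real d + 1 = (real d - 1)^2" by (simp add: power2_eq_square algebra_simps)
      then show ?thesis by simp
    qed
    ultimately show ?thesis using dpos by simp
  qed
  define X where "X = real d * (real d + 1) * (1 + c)"
  define Y where "Y = real d * (real d - 1) * (1 - c)"
  have Xpos: "X > 0" unfolding X_def using c_gt dpos by simp
  have YX: "Y > X"
  proof -
    have "Y - X = - 2 * real d * (1 + c * d)" unfolding X_def Y_def by (simp add: algebra_simps)
    moreover have "(1 + c * real d) * (real d * 2) < 0"
      using c_lt dpos by (intro mult_neg_pos) simp_all
    ultimately show ?thesis by simp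
  qed
  have q1: "Y / X > 1" using YX Xpos by simp
  obtain n where n: "3 * (1 + c) / (1 - c) < (Y / X) ^ n"
    using real_arch_pow[OF q1] by blast
  define a where "a = 3 * (1 + c) * X ^ n - (1 - c) * Y ^ n"
  have aneg: "a < 0"
  proof -
    have omc: "1 - c > 0" using c_lt dpos by (smt (verit) c_gt mult_nonneg_nonneg of_nat_0_le_iff)
    have "3 * (1 + c) < (Y / X) ^ n * (1 - c)" using n omc by (simp add: divide_less_eq)
    then have "3 * (1 + c) * X ^ n < (Y / X) ^ n * X ^ n * (1 - c)"
      using Xpos by (simp add: mult.commute mult.left_commute)
    also have "(Y / X) ^ n * X ^ n = Y ^ n" using Xpos by (simp add: power_divide)
    finally show ?thesis unfolding a_def by (simp add: mult.commute)
  qed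
  define \<psi> where "\<psi> = (\<lambda>(xs, ys). Psi 0 1 xs ys)"
  have val: "qform (tlabels ?S (Suc n)) (tlabels ?S (Suc n)) (ptrans_B (tpow (Suc n) (\<lambda>u v. ?W u v / ?T))) \<psi>
      = complex_of_real (a / t ^ Suc n)"
  proof -
    have "qform (tlabels ?S (Suc n)) (tlabels ?S (Suc n)) (ptrans_B (tpow (Suc n) (\<lambda>u v. ?W u v / ?T))) \<psi>
       = HH ?S ?W (Suc n) 0 0 1 1 / ?T ^ Suc n"
      unfolding \<psi>_def qform_HH HH_scale ..
    also have "HH ?S ?W (Suc n) 0 0 1 1 = fst (AB cc (of_nat d) n)"
      using HH_closed[OF cc d2, of 0 0 1 1 n] d2 by (simp add: kd_def)
    also have "fst (AB cc (of_nat d) n) = complex_of_real a"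
      unfolding AB_closed a_def X_def Y_def cc_def by simp
    finally show ?thesis unfolding T by simp
  qed
  have srk: "schmidt_rank_le 2 (tlabels ?S (Suc n)) (tlabels ?S (Suc n)) \<psi>"
    unfolding schmidt_rank_le_def \<psi>_def Psi_def by (intro exI[of _ "\<lambda>i xs. ch i 0 xs"] exI[of _ "\<lambda>i ys. ch i 1 ys"]) simp
  have "a / t ^ Suc n < 0" using aneg tpos by (simp add: divide_neg_pos)
  then show ?thesis
    unfolding distillable_def Let_def
    by (intro exI[of _ "Suc n"] conjI exI[of _ \<psi>]) (simp_all add: srk val)
qed
end
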